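(* Consider the memoryless $K$-user channel $$Y_k=X_k\exp\!\Big(i\sum_{\ell=1}^K h_{k\ell}|X_\ell|^2\Big)+Z_k,\qquad k=1,\dots,K,$$ where $Z_1,\dots,Z_K$ are independent circularly-symmetric complex Gaussian with variance $N$, independent of the inputs, the $h_{kk}$ are real, and the cross coefficients $h_{k\ell}$, $k\neq\ell$, are rational numbers. For each $\ell$ let $q_\ell>0$ be such that $h_{k\ell}q_\ell\in\mathbb{Z}$ for all $k\neq\ell$. Then there exist independent input distributions with $|X_\ell|^2\in\{2\pi q_\ell m: m=1,2,\dots\}$ almost surely and $\mathbb{E}|X_\ell|^2\le P^{(\ell)}$, such that for every $k$ the rate $R_k=I(X_k;Y_k)$ satisfies $\liminf R_k/\log(P^{(k)}/N)\ge 1$ as $P^{(1)}/N,\dots,P^{(K)}/N\to\infty$; i.e. each user achieves pre-log $1$.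
   Context: Pre-log of user $k$: $r_k=\lim_{P^{(1)}/N,\dots,P^{(K)}/N\to\infty} R_k/\log(P^{(k)}/N)$, where $R_k$ is the information rate of user $k$ under average power constraints $\frac1n\sum_{j=1}^n\mathbb{E}|X_{k,j}|^2\le P^{(k)}$. Inputs are used i.i.d. over time. *)

theory Defs
  imports "HOL-Probability.Probability"
begin

text \<open>Density (w.r.t. Lebesgue measure on the complex plane) of a circularly-symmetric
complex Gaussian with variance N, i.e. E|Z|^2 = N.\<close>
definition cscg_density :: "real \<Rightarrow> complex \<Rightarrow> real" where
  "cscg_density N z = exp (- (cmod z)\<^sup>2 / N) / (pi * N)"

text \<open>Filter on power vectors (indexed by users 0..K-1): all powers P l, l < K, tend to
infinity jointly.  (With N > 0 fixed, this is the same as all P l / N tending to infinity.)\<close>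
definition powers_to_infty :: "nat \<Rightarrow> (nat \<Rightarrow> real) filter" where
  "powers_to_infty K = (INF B. principal {P. \<forall>l<K. B \<le> P l})"

definition admissible_input :: "real \<Rightarrow> real \<Rightarrow> complex measure \<Rightarrow> bool" where
  "admissible_input q p \<mu> \<longleftrightarrow>
     prob_space \<mu> \<and> sets \<mu> = sets borel \<and>
     (AE x in \<mu>. \<exists>m::nat. m \<ge> 1 \<and> (cmod x)\<^sup>2 = 2 * pi * q * real m) \<and>
     (\<integral>\<^sup>+ x. ennreal ((cmod x)\<^sup>2) \<partial>\<mu>) \<le> ennreal p"

definition channel_out ::
  "nat \<Rightarrow> (nat \<Rightarrow> nat \<Rightarrow> real) \<Rightarrow> (nat \<Rightarrow> 'a \<Rightarrow> complex) \<Rightarrow> (nat \<Rightarrow> 'a \<Rightarrow> complex)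
    \<Rightarrow> nat \<Rightarrow> 'a \<Rightarrow> complex" where
  "channel_out K h X Z k \<omega> =
     X k \<omega> * cis (\<Sum>l<K. h k l * (cmod (X l \<omega>))\<^sup>2) + Z k \<omega>"

definition channel_setup ::
  "'a measure \<Rightarrow> nat \<Rightarrow> real \<Rightarrow> (nat \<Rightarrow> real \<Rightarrow> complex measure) \<Rightarrow> (nat \<Rightarrow> real)
    \<Rightarrow> (nat \<Rightarrow> 'a \<Rightarrow> complex) \<Rightarrow> (nat \<Rightarrow> 'a \<Rightarrow> complex) \<Rightarrow> bool" where
  "channel_setup M K N \<mu> P X Z \<longleftrightarrow>
     prob_space M \<and>
     (\<forall>l<K. X l \<in> borel_measurable M \<and> distr M borel (X l) = \<mu> l (P l)) \<and>
     (\<forall>k<K. distributed M lborel (Z k) (\<lambda>z. ennreal (cscg_density N z))) \<and>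
     prob_space.indep_vars M (\<lambda>_. borel)
        (\<lambda>i. case i of Inl l \<Rightarrow> X l | Inr k \<Rightarrow> Z k) ({..<K} <+> {..<K})"

end

theory Submission
  imports Defs "HOL-Real_Asymp.Real_Asymp"
begin


lemma xlnx_bound:
  fixes t a :: real assumes "t \<ge> 0" "a > 0"
  shows "t * ln a + t - a \<le> t * ln t"
proof (cases "t = 0")
  case True then show ?thesis using assms by simp
next
  case False
  then have t: "t > 0" using assms by simp
  have "ln (a / t) \<le> a / t - 1" using ln_le_minus_one[of "a/t"] t assms by simp
  then have "t * ln (a / t) \<le> t * (a / t - 1)" using t by (simp add: mult_left_mono)
  also have "\<dots> = a - t" using t by (simp add: field_simps)
  finally show ?thesis using t assms by (simp add: ln_div algebra_simps)
qed

lemma KL_lower: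
  fixes P Q :: "'b measure" and c a b :: real and A :: "'b set"
  assumes P: "prob_space P" and Q: "prob_space Q" and sets: "sets Q = sets P"
    and dom: "\<And>E. E \<in> sets P \<Longrightarrow> emeasure Q E \<le> ennreal c * emeasure P E"
    and A: "A \<in> sets P" and a: "a > 0" and c: "c \<ge> 0" and b: "b > 1"
  shows "(measure Q A * (ln a + 1) - a * measure P A - 1) / ln b \<le> KL_divergence b P Q"
proof -
  interpret P: prob_space P by fact
  interpret Q: prob_space Q by fact
  have ac: "absolutely_continuous P Q"
    unfolding absolutely_continuous_def
  proof
    fix E assume "E \<in> null_sets P"
    then have "E \<in> sets P" "emeasure P E = 0" by auto
    then have "emeasure Q E \<le> 0" using dom[of E] by simp
    then show "E \<in> null_sets Q" using \<open>E \<in> sets P\<close> sets by auto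
  qed
  define g where "g = RN_deriv P Q"
  have gm[measurable]: "g \<in> borel_measurable P" unfolding g_def by simp
  have dens: "density P g = Q" unfolding g_def using P.density_RN_deriv[OF ac sets] .
  define B where "B = {x\<in>space P. ennreal c < g x}"
  have Bm[measurable]: "B \<in> sets P" unfolding B_def by measurable
  have gle: "AE x in P. g x \<le> ennreal c"
  proof (rule ccontr)
    assume nAE: "\<not> (AE x in P. g x \<le> ennreal c)"
    have "(\<integral>\<^sup>+x. ennreal c * indicator B x \<partial>P) < (\<integral>\<^sup>+x. g x * indicator B x \<partial>P)"
    proof (rule nn_integral_less)
      show "(\<integral>\<^sup>+x. ennreal c * indicator B x \<partial>P) \<noteq> \<infinity>"
        using Bm by (simp add: nn_integral_cmult_indicator P.emeasure_eq_measure ennreal_mult_eq_top_iff)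
      show "AE x in P. ennreal c * indicator B x \<le> g x * indicator B x"
        by (auto simp: B_def indicator_def less_imp_le)
      show "\<not> (AE x in P. g x * indicator B x \<le> ennreal c * indicator B x)"
      proof
        assume "AE x in P. g x * indicator B x \<le> ennreal c * indicator B x"
        then have "AE x in P. g x \<le> ennreal c"
          using AE_space
        proof eventually_elim
          fix x assume "g x * indicator B x \<le> ennreal c * indicator B x" "x \<in> space P"
          then show "g x \<le> ennreal c"
            by (cases "ennreal c < g x") (auto simp: B_def indicator_def)
        qed
        with nAE show False by simp
      qed
    qed simp_all
    also have "(\<integral>\<^sup>+x. g x * indicator B x \<partial>P) = emeasure Q B"
      using emeasure_density[OF gm Bm] dens by simp
    also have "\<dots> \<le> ennreal c * emeasure P B" using dom Bm by simp
    also have "\<dots> = (\<integral>\<^sup>+x. ennreal c * indicator B x \<partial>P)"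
      using Bm by (simp add: nn_integral_cmult_indicator)
    finally show False by simp
  qed
  define f where "f x = enn2real (g x)" for x
  have fm[measurable]: "f \<in> borel_measurable P" unfolding f_def by measurable
  have f0: "\<And>x. 0 \<le> f x" unfolding f_def by simp
  have gf: "AE x in P. g x = ennreal (f x)"
    using gle by eventually_elim (auto simp: f_def ennreal_enn2real_if top_unique)
  have fc: "AE x in P. f x \<le> c"
    using gle gf by eventually_elim (use c in auto)
  have Qf: "density P (\<lambda>x. ennreal (f x)) = Q"
    using density_cong[OF gm _ gf] dens by simp
  have KL: "KL_divergence b P Q = (\<integral>x. f x * log b (f x) \<partial>P)"
    using P.KL_density[OF b fm] f0 Qf by simp
  define h where "h x = (indicator A x * (f x * (ln a + 1) - a) - 1) / ln b" for x
  have lnb: "ln b > 0" using b by simp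
  have pw: "AE x in P. h x \<le> f x * log b (f x)"
  proof (rule AE_I2)
    fix x
    have "f x * ln a + f x - a \<le> f x * ln (f x)" by (rule xlnx_bound[OF f0 a])
    moreover have "1 * ln 1 + f x - 1 \<le> f x * ln (f x)" using xlnx_bound[OF f0, of 1] by simp
    ultimately have "indicator A x * (f x * (ln a + 1) - a) - 1 \<le> f x * ln (f x)"
      using a f0[of x] by (auto simp: indicator_def algebra_simps)
    then show "h x \<le> f x * log b (f x)"
      unfolding h_def log_def using lnb by (simp add: divide_right_mono)
  qed
  have intf: "integrable P (\<lambda>x. f x * log b (f x))"
  proof (rule P.integrable_const_bound[where B="(c * c + 1) / ln b"])
    show "AE x in P. norm (f x * log b (f x)) \<le> (c * c + 1) / ln b"
      using fc
    proof eventually_elim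
      fix x assume fx: "f x \<le> c"
      have lo: "f x - 1 \<le> f x * ln (f x)" using xlnx_bound[OF f0, of 1] by simp
      have up: "f x * ln (f x) \<le> f x * f x"
      proof (cases "f x = 0")
        case False then have "ln (f x) \<le> f x - 1" using f0[of x] by (intro ln_le_minus_one) auto
        then have "f x * ln (f x) \<le> f x * (f x - 1)" using f0[of x] by (simp add: mult_left_mono)
        then show ?thesis using f0[of x] by (simp add: algebra_simps)
      qed simp
      have "f x * f x \<le> c * c" using fx f0[of x] by (simp add: mult_mono)
      then have "\<bar>f x * ln (f x)\<bar> \<le> c * c + 1" using lo up f0[of x] mult_nonneg_nonneg[OF c c] unfolding abs_le_iff by linarith
      then show "norm (f x * log b (f x)) \<le> (c * c + 1) / ln b"
        unfolding log_def using lnb by (simp add: abs_mult divide_right_mono)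
    qed
  qed simp
  have intf1: "integrable P f"
    by (rule P.integrable_const_bound[where B=c]) (use fc f0 in auto)
  have intfA: "integrable P (\<lambda>x. f x * indicator A x)"
    using integrable_mult_indicator[OF A intf1] by (simp add: mult.commute)
  have intA: "integrable P (\<lambda>x. indicator A x :: real)"
    by (rule P.integrable_const_bound[where B=1]) (use A in \<open>auto simp: indicator_def\<close>)
  have heq: "h = (\<lambda>x. ((ln a + 1) * (f x * indicator A x) - a * indicator A x - 1) / ln b)"
    by (auto simp: h_def fun_eq_iff algebra_simps)
  have inth: "integrable P h"
    unfolding heq using intfA intA by simp
  have i1: "(\<integral>x. f x * indicator A x \<partial>P) = measure Q A"
  proof -
    have "(\<integral>x. indicator A x \<partial>Q) = measure Q A" using A sets by simp
    moreover have "(\<integral>x. indicator A x \<partial>Q) = (\<integral>x. f x * indicator A x \<partial>P)"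
    proof -
      have "(\<integral>x. (indicator A x :: real) \<partial>(density P (\<lambda>x. ennreal (f x)))) = (\<integral>x. f x *\<^sub>R (indicator A x :: real) \<partial>P)"
        by (subst integral_density) (use A f0 in auto)
      then show ?thesis using Qf by simp
    qed
    ultimately show ?thesis by simp
  qed
  have "(\<integral>x. h x \<partial>P) \<le> (\<integral>x. f x * log b (f x) \<partial>P)"
    by (rule integral_mono_AE[OF inth intf pw])
  moreover have "(\<integral>x. h x \<partial>P) = (measure Q A * (ln a + 1) - a * measure P A - 1) / ln b"
    unfolding heq using intfA intA A i1 by (simp add: algebra_simps P.prob_space)
  ultimately show ?thesis using KL by simp
qed



lemma emeasure_pair_pmf:
  fixes S :: "complex set" and \<nu> :: "complex measure"
  assumes S: "finite S" "S \<noteq> {}" and nu: "prob_space \<nu>" "sets \<nu> = sets borel"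
    and E: "E \<in> sets (borel \<Otimes>\<^sub>M borel)"
  shows "emeasure (distr (measure_pmf (pmf_of_set S)) borel id \<Otimes>\<^sub>M \<nu>) E
     = (\<Sum>s\<in>S. emeasure \<nu> (Pair s -` E)) / of_nat (card S)"
proof -
  interpret nu: prob_space \<nu> by fact
  let ?X = "distr (measure_pmf (pmf_of_set S)) borel id"
  have E': "E \<in> sets (?X \<Otimes>\<^sub>M \<nu>)"
    using E by (subst sets_pair_measure_cong[of _ borel _ borel]) (simp_all add: nu)
  have "emeasure (?X \<Otimes>\<^sub>M \<nu>) E = (\<integral>\<^sup>+x. emeasure \<nu> (Pair x -` E) \<partial>?X)"
    by (rule nu.emeasure_pair_measure_alt[OF E'])
  also have "\<dots> = (\<integral>\<^sup>+x. emeasure \<nu> (Pair (id x) -` E) \<partial>measure_pmf (pmf_of_set S))"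
  proof -
    have mE: "(\<lambda>x. emeasure \<nu> (Pair x -` E)) \<in> borel_measurable ?X"
      by (rule nu.measurable_emeasure_Pair[OF E'])
    show ?thesis by (rule nn_integral_distr[OF _ mE]) simp
  qed
  also have "\<dots> = (\<Sum>s\<in>S. emeasure \<nu> (Pair s -` E)) / of_nat (card S)"
    using S by (simp add: nn_integral_pmf_of_set)
  finally show ?thesis .
qed

lemma info_bound:
  fixes M :: "'a measure" and X Y :: "'a \<Rightarrow> complex" and S :: "complex set"
    and g :: "complex \<Rightarrow> complex" and \<delta> e :: real
  assumes M: "prob_space M" and Xm[measurable]: "X \<in> borel_measurable M"
    and Ym[measurable]: "Y \<in> borel_measurable M"
    and S: "finite S" "S \<noteq> {}"
    and dX: "distr M borel X = distr (measure_pmf (pmf_of_set S)) borel id"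
    and sep: "\<And>s s'. s \<in> S \<Longrightarrow> s' \<in> S \<Longrightarrow> s \<noteq> s' \<Longrightarrow> 2 * \<delta> \<le> dist (g s) (g s')"
    and good: "1 - e \<le> measure M {\<omega>\<in>space M. X \<omega> \<in> S \<and> dist (g (X \<omega>)) (Y \<omega>) < \<delta>}"
    and e: "e \<le> 1"
  shows "((1 - e) * ln (card S) - 2) / ln 2 \<le> prob_space.mutual_information M 2 borel borel X Y"
proof -
  interpret M: prob_space M by fact
  define n where "n = card S"
  have n0: "n > 0" using S by (simp add: n_def card_gt_0_iff)
  let ?X = "distr M borel X" and ?Y = "distr M borel Y"
  define P where "P = ?X \<Otimes>\<^sub>M ?Y"
  define Q where "Q = distr M (borel \<Otimes>\<^sub>M borel) (\<lambda>\<omega>. (X \<omega>, Y \<omega>))"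
  have MI: "M.mutual_information 2 borel borel X Y = KL_divergence 2 P Q"
    unfolding M.mutual_information_def P_def Q_def ..
  have pX: "prob_space ?X" and pY: "prob_space ?Y"
    by (auto intro!: M.prob_space_distr)
  interpret Y: prob_space ?Y by fact
  have pP: "prob_space P" unfolding P_def using pX pY by (intro prob_space_pair) 
  interpret Pp: prob_space P by fact
  have pQ: "prob_space Q" unfolding Q_def by (intro M.prob_space_distr) simp
  have setsP: "sets P = sets (borel \<Otimes>\<^sub>M borel)"
    unfolding P_def by (rule sets_pair_measure_cong) simp_all
  have setsQ: "sets Q = sets P" unfolding Q_def setsP by simp
  have Pform: "emeasure P E = (\<Sum>s\<in>S. emeasure ?Y (Pair s -` E)) / of_nat n"
    if E: "E \<in> sets (borel \<Otimes>\<^sub>M borel)" for E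
    unfolding P_def dX n_def by (rule emeasure_pair_pmf[OF S pY _ E]) simp
  have XS: "emeasure M {\<omega>\<in>space M. X \<omega> \<notin> S} = 0"
  proof -
    have cS: "- S \<in> sets borel" using S by (intro borel_open open_Compl finite_imp_closed)
    have "emeasure M {\<omega>\<in>space M. X \<omega> \<notin> S} = emeasure M (X -` (-S) \<inter> space M)"
      by (intro arg_cong[where f="emeasure M"]) auto
    also have "\<dots> = emeasure ?X (- S)" by (rule emeasure_distr[symmetric]) (use cS in auto)
    also have "\<dots> = emeasure (distr (measure_pmf (pmf_of_set S)) borel id) (- S)" unfolding dX ..
    also have "\<dots> = emeasure (measure_pmf (pmf_of_set S)) (id -` (- S) \<inter> UNIV)"
      by (subst emeasure_distr) (use cS in auto)
    also have "\<dots> = 0" using S by (simp add: emeasure_pmf_of_set)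
    finally show ?thesis .
  qed
  have XSm: "{\<omega>\<in>space M. X \<omega> \<notin> S} \<in> sets M"
  proof -
    have cS: "- S \<in> sets borel" using S by (intro borel_open open_Compl finite_imp_closed)
    have eq: "{\<omega>\<in>space M. X \<omega> \<notin> S} = X -` (-S) \<inter> space M" by auto
    show ?thesis unfolding eq using measurable_sets[OF Xm cS] .
  qed
  have dom: "emeasure Q E \<le> ennreal (real n) * emeasure P E" if E: "E \<in> sets P" for E
  proof -
    have E2: "E \<in> sets (borel \<Otimes>\<^sub>M borel)" using E setsP by simp
    have sub: "{\<omega>\<in>space M. (X \<omega>, Y \<omega>) \<in> E} \<subseteq>
        {\<omega>\<in>space M. X \<omega> \<notin> S} \<union> (\<Union>s\<in>S. {\<omega>\<in>space M. (s, Y \<omega>) \<in> E})" by auto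
    have Es: "\<And>s. {\<omega>\<in>space M. (s, Y \<omega>) \<in> E} \<in> sets M"
      using E2 by measurable
    have "emeasure Q E = emeasure M {\<omega>\<in>space M. (X \<omega>, Y \<omega>) \<in> E}"
      unfolding Q_def using E2 by (subst emeasure_distr) (auto simp: vimage_def Int_def conj_commute)
    also have "\<dots> \<le> emeasure M ({\<omega>\<in>space M. X \<omega> \<notin> S} \<union> (\<Union>s\<in>S. {\<omega>\<in>space M. (s, Y \<omega>) \<in> E}))"
      using Es S XSm by (intro emeasure_mono[OF sub] sets.Un sets.finite_UN) auto
    also have "\<dots> \<le> emeasure M {\<omega>\<in>space M. X \<omega> \<notin> S} + emeasure M (\<Union>s\<in>S. {\<omega>\<in>space M. (s, Y \<omega>) \<in> E})"
      using Es S XSm by (intro emeasure_subadditive) auto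
    also have "\<dots> \<le> 0 + (\<Sum>s\<in>S. emeasure M {\<omega>\<in>space M. (s, Y \<omega>) \<in> E})"
      unfolding XS using Es S by (intro add_mono emeasure_subadditive_finite) auto
    also have "\<dots> = (\<Sum>s\<in>S. emeasure ?Y (Pair s -` E))"
      using E2 by (auto intro!: sum.cong simp: emeasure_distr vimage_def Int_def conj_commute)
    also have "\<dots> = of_nat n * ((\<Sum>s\<in>S. emeasure ?Y (Pair s -` E)) / of_nat n)"
      using n0 by (subst ennreal_times_divide, subst mult.commute, subst ennreal_mult_divide_eq) auto
    also have "\<dots> = ennreal (real n) * emeasure P E"
      using Pform[OF E2] by (simp add: ennreal_of_nat_eq_real_of_nat)
    finally show ?thesis .
  qed
  define A where "A = (\<Union>s\<in>S. {s} \<times> ball (g s) \<delta>)"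
  have A2: "A \<in> sets (borel \<Otimes>\<^sub>M borel)"
    unfolding A_def using S by (intro sets.finite_UN pair_measureI) (auto intro: closed_singleton)
  have AP: "A \<in> sets P" using A2 setsP by simp
  have secA: "Pair s -` A = ball (g s) \<delta>" if "s \<in> S" for s
    using that by (auto simp: A_def)
  have PA: "real n * measure P A \<le> 1"
  proof -
    have disj: "disjoint_family_on (\<lambda>s. ball (g s) \<delta>) S"
      unfolding disjoint_family_on_def
    proof (intro ballI impI)
      fix s s' assume ss: "s \<in> S" "s' \<in> S" "s \<noteq> s'"
      show "ball (g s) \<delta> \<inter> ball (g s') \<delta> = {}"
      proof (rule ccontr)
        assume "ball (g s) \<delta> \<inter> ball (g s') \<delta> \<noteq> {}"
        then obtain z where "dist (g s) z < \<delta>" "dist (g s') z < \<delta>" by auto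
        then have "dist (g s) (g s') < 2 * \<delta>" using dist_triangle3[of "g s" "g s'" z] dist_commute[of z "g s"] dist_commute[of z "g s'"] by linarith
        with sep[OF ss] show False by simp
      qed
    qed
    have "emeasure P A = (\<Sum>s\<in>S. emeasure ?Y (ball (g s) \<delta>)) / of_nat n"
      using Pform[OF A2] secA by simp
    also have "(\<Sum>s\<in>S. emeasure ?Y (ball (g s) \<delta>)) = emeasure ?Y (\<Union>s\<in>S. ball (g s) \<delta>)"
      using disj S by (intro sum_emeasure) auto
    also have "\<dots> \<le> 1" by (rule Y.emeasure_le_1)
    finally have "emeasure P A \<le> 1 / of_nat n" by (simp add: divide_right_mono_ennreal)
    moreover have e1: "1 / (of_nat n :: ennreal) = ennreal (1 / real n)"
      using n0 by (metis divide_ennreal ennreal_1 ennreal_of_nat_eq_real_of_nat of_nat_0_less_iff zero_le_one)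
    ultimately have "measure P A \<le> 1 / real n"
      by (simp add: Pp.emeasure_eq_measure)
    then show ?thesis using n0 by (simp add: field_simps)
  qed
  have QA: "1 - e \<le> measure Q A"
  proof -
    have "measure Q A = measure M {\<omega>\<in>space M. (X \<omega>, Y \<omega>) \<in> A}"
      unfolding Q_def using A2 by (subst measure_distr) (auto simp: vimage_def Int_def conj_commute)
    also have "{\<omega>\<in>space M. (X \<omega>, Y \<omega>) \<in> A} = {\<omega>\<in>space M. X \<omega> \<in> S \<and> dist (g (X \<omega>)) (Y \<omega>) < \<delta>}"
      by (auto simp: A_def)
    finally show ?thesis using good by simp
  qed
  have "(measure Q A * (ln (real n) + 1) - real n * measure P A - 1) / ln 2 \<le> KL_divergence 2 P Q"
    using n0 by (intro KL_lower[OF pP pQ setsQ dom AP]) auto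
  moreover have "((1 - e) * ln (real n) - 2) / ln 2 \<le> (measure Q A * (ln (real n) + 1) - real n * measure P A - 1) / ln 2"
  proof (rule divide_right_mono)
    have "ln (real n) \<ge> 0" using n0 by simp
    then have "(1 - e) * (ln (real n) + 1) \<le> measure Q A * (ln (real n) + 1)"
      using QA by (intro mult_right_mono) auto
    then show "(1 - e) * ln (real n) - 2 \<le> measure Q A * (ln (real n) + 1) - real n * measure P A - 1"
      using PA e by (simp add: algebra_simps)
  qed simp
  ultimately show ?thesis using MI n_def by simp
qed



lemma sin_half: fixes t :: real assumes "0 \<le> t" "t \<le> 1" shows "t / 2 \<le> sin t"
proof (cases "t = 0")
  case True then show ?thesis by simp
next
  case False
  then have t: "0 < t" using assms by simp
  obtain z where z: "0 < z" "z < t" "sin t - sin 0 = (t - 0) * cos z"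
    using MVT2[of 0 t sin cos] t by (auto intro: DERIV_sin)
  have "cos (pi / 3) \<le> cos z"
    using z assms pi_gt3 by (intro cos_monotone_0_pi_le) auto
  then have "1/2 \<le> cos z" by (simp add: cos_60)
  then show ?thesis using z t by (simp add: mult_left_mono[of "1/2" "cos z" t, simplified])
qed

lemma abs_sin_half: fixes t :: real assumes "\<bar>t\<bar> \<le> 1" shows "\<bar>t\<bar> / 2 \<le> \<bar>sin t\<bar>"
proof (cases "t \<ge> 0")
  case True then show ?thesis using sin_half[of t] assms by auto
next
  case False then show ?thesis using sin_half[of "-t"] assms by auto
qed

lemma cis_diff_norm:
  fixes a b :: real assumes "\<bar>a - b\<bar> \<le> 1"
  shows "\<bar>a - b\<bar> / 2 \<le> cmod (cis a - cis b)"
proof -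
  have cm: "cis b * cis (a - b) = cis a" by (simp add: cis_mult)
  have "cis a - cis b = cis b * (cis (a - b) - 1)" by (simp add: right_diff_distrib cm)
  then have "cmod (cis a - cis b) = cmod (cis (a - b) - 1)" by (simp add: norm_mult)
  moreover have "\<bar>sin (a - b)\<bar> \<le> cmod (cis (a - b) - 1)"
    using abs_Im_le_cmod[of "cis (a - b) - 1"] by simp
  ultimately show ?thesis using abs_sin_half[OF assms] by linarith
qed

definition sf :: "real \<Rightarrow> nat" where "sf p = nat \<lceil>ln p\<rceil> + 1"
definition rho :: "real \<Rightarrow> real \<Rightarrow> real" where "rho q p = sqrt (2 * pi * q * real (sf p))"
definition Jn :: "real \<Rightarrow> real \<Rightarrow> nat" where "Jn q p = nat \<lfloor>sqrt p / (2 * rho q p)\<rfloor>"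
definition pt :: "real \<Rightarrow> real \<Rightarrow> nat \<times> nat \<Rightarrow> complex" where
  "pt q p ji = complex_of_real (rho q p * real (fst ji)) * cis (real (snd ji) / real (Jn q p))"
definition Iset :: "real \<Rightarrow> real \<Rightarrow> (nat \<times> nat) set" where
  "Iset q p = {Jn q p..<2 * Jn q p} \<times> {..<Jn q p}"
definition Sset :: "real \<Rightarrow> real \<Rightarrow> complex set" where "Sset q p = pt q p ` Iset q p"
definition mu :: "real \<Rightarrow> real \<Rightarrow> complex measure" where
  "mu q p = distr (measure_pmf (pmf_of_set (Sset q p))) borel id"

lemma rho_pos: "q > 0 \<Longrightarrow> rho q p > 0"
  by (simp add: rho_def sf_def)

lemma rho_sq: "q > 0 \<Longrightarrow> (rho q p)\<^sup>2 = 2 * pi * q * real (sf p)"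
  by (simp add: rho_def)

lemma cmod_pt: "q > 0 \<Longrightarrow> cmod (pt q p ji) = rho q p * real (fst ji)"
  using rho_pos[of q p] by (simp add: pt_def norm_mult)

lemma Sset_mod:
  assumes q: "q > 0" and x: "x \<in> Sset q p"
  shows "\<exists>m::nat. m \<ge> 1 \<and> (cmod x)\<^sup>2 = 2 * pi * q * real m"
proof -
  obtain j i where ji: "(j, i) \<in> Iset q p" "x = pt q p (j, i)" using x by (auto simp: Sset_def)
  then have j: "j \<ge> 1" by (auto simp: Iset_def)
  have "(cmod x)\<^sup>2 = (rho q p)\<^sup>2 * (real j)\<^sup>2" using ji cmod_pt[OF q] by (simp add: power_mult_distrib)
  also have "\<dots> = 2 * pi * q * real (sf p * j\<^sup>2)" using rho_sq[OF q] by simp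
  moreover have "1 \<le> sf p * j\<^sup>2"
  proof -
    have j2: "1 \<le> j\<^sup>2" using j by (metis one_le_power)
    have "1 \<le> sf p" by (simp add: sf_def)
    then show ?thesis using j2 by (metis mult_le_mono nat_mult_1)
  qed
  ultimately show ?thesis by (intro exI[of _ "sf p * j\<^sup>2"]) auto
qed

lemma Sset_energy:
  assumes q: "q > 0" and p: "p \<ge> 0" and x: "x \<in> Sset q p"
  shows "(cmod x)\<^sup>2 \<le> p"
proof -
  obtain j i where ji: "(j, i) \<in> Iset q p" "x = pt q p (j, i)" using x by (auto simp: Sset_def)
  then have j: "j < 2 * Jn q p" by (auto simp: Iset_def)
  have r: "rho q p > 0" by (rule rho_pos[OF q])
  have J: "real (Jn q p) \<le> sqrt p / (2 * rho q p)"
    unfolding Jn_def using r p by (simp add: of_nat_nat)  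
  have "cmod x = rho q p * real j" using ji cmod_pt[OF q] by simp
  also have "\<dots> \<le> rho q p * (2 * real (Jn q p))" using j r by (intro mult_left_mono) auto
  also have "\<dots> \<le> rho q p * (2 * (sqrt p / (2 * rho q p)))" using J r by (intro mult_left_mono) auto
  also have "\<dots> = sqrt p" using r by (simp add: field_simps)
  finally have "cmod x \<le> sqrt p" .
  then have "(cmod x)\<^sup>2 \<le> (sqrt p)\<^sup>2" by (intro power_mono) auto
  then show ?thesis using p by simp
qed

lemma Sset_sep:
  assumes q: "q > 0" and a: "a \<in> Iset q p" and b: "b \<in> Iset q p" and ab: "a \<noteq> b"
  shows "rho q p / 2 \<le> dist (pt q p a * cis (h * (cmod (pt q p a))\<^sup>2)) (pt q p b * cis (h * (cmod (pt q p b))\<^sup>2))"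
proof -
  obtain j i where a': "a = (j, i)" by (cases a)
  obtain j' i' where b': "b = (j', i')" by (cases b)
  let ?J = "Jn q p"
  have r: "rho q p > 0" by (rule rho_pos[OF q])
  have jr: "?J \<le> j" "j < 2 * ?J" "i < ?J" "?J \<le> j'" "i' < ?J" using a b a' b' by (auto simp: Iset_def)
  let ?gx = "pt q p a * cis (h * (cmod (pt q p a))\<^sup>2)" and ?gy = "pt q p b * cis (h * (cmod (pt q p b))\<^sup>2)"
  show ?thesis
  proof (cases "j = j'")
    case False
    have "\<bar>cmod ?gx - cmod ?gy\<bar> \<le> cmod (?gx - ?gy)" by (rule norm_triangle_ineq3)
    moreover have "cmod ?gx = rho q p * real j" "cmod ?gy = rho q p * real j'"
      using cmod_pt[OF q] a' b' by (simp_all add: norm_mult)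
    moreover have "rho q p \<le> \<bar>rho q p * real j - rho q p * real j'\<bar>"
    proof -
      have "1 \<le> \<bar>real j - real j'\<bar>" using False by linarith
      then have "rho q p * 1 \<le> rho q p * \<bar>real j - real j'\<bar>" using r by (intro mult_left_mono) auto
      then show ?thesis using r by (simp add: abs_mult right_diff_distrib[symmetric])
    qed
    ultimately show ?thesis using r by (simp add: dist_norm)
  next
    case True
    then have ii: "i \<noteq> i'" using ab a' b' by auto
    have J1: "?J \<ge> 1" using jr by simp
    have eqm: "cmod (pt q p a) = cmod (pt q p b)" using cmod_pt[OF q] a' b' True by simp
    have "?gx - ?gy = (pt q p a - pt q p b) * cis (h * (cmod (pt q p a))\<^sup>2)"
      using eqm by (simp add: algebra_simps)
    then have "dist ?gx ?gy = cmod (pt q p a - pt q p b)" by (simp add: dist_norm norm_mult)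
    also have "pt q p a - pt q p b = complex_of_real (rho q p * real j) * (cis (real i / real ?J) - cis (real i' / real ?J))"
      using a' b' True by (simp add: pt_def algebra_simps)
    also have "cmod \<dots> = rho q p * real j * cmod (cis (real i / real ?J) - cis (real i' / real ?J))"
      using r by (simp add: norm_mult)
    finally have d: "dist ?gx ?gy = rho q p * real j * cmod (cis (real i / real ?J) - cis (real i' / real ?J))" .
    have t: "\<bar>real i / real ?J - real i' / real ?J\<bar> = \<bar>real i - real i'\<bar> / real ?J"
      using J1 by (simp add: diff_divide_distrib[symmetric])
    have t1: "\<bar>real i - real i'\<bar> \<le> real ?J" using jr by linarith
    have t2: "1 \<le> \<bar>real i - real i'\<bar>" using ii by linarith
    have le1: "\<bar>real i / real ?J - real i' / real ?J\<bar> \<le> 1" using t t1 J1 by (simp add: divide_le_eq_1)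
    have "1 / real ?J / 2 \<le> \<bar>real i / real ?J - real i' / real ?J\<bar> / 2"
      using t t2 J1 by (simp add: divide_right_mono)
    also have "\<dots> \<le> cmod (cis (real i / real ?J) - cis (real i' / real ?J))" by (rule cis_diff_norm[OF le1])
    finally have c: "1 / (2 * real ?J) \<le> cmod (cis (real i / real ?J) - cis (real i' / real ?J))" by simp
    have "rho q p / 2 = rho q p * real ?J * (1 / (2 * real ?J))" using J1 by simp
    also have "\<dots> \<le> rho q p * real j * cmod (cis (real i / real ?J) - cis (real i' / real ?J))"
      using r jr c J1 by (intro mult_mono) auto
    finally show ?thesis using d by simp
  qed
qed

lemma Sset_card:
  assumes q: "q > 0" shows "card (Sset q p) = Jn q p * Jn q p"
proof -
  have "inj_on (pt q p) (Iset q p)"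
  proof (rule inj_onI)
    fix a b assume ab: "a \<in> Iset q p" "b \<in> Iset q p" "pt q p a = pt q p b"
    show "a = b"
    proof (rule ccontr)
      assume "a \<noteq> b"
      from Sset_sep[OF q ab(1,2) this, of 0] ab(3) rho_pos[OF q, of p] show False by simp
    qed
  qed
  then have "card (Sset q p) = card (Iset q p)" unfolding Sset_def by (rule card_image)
  also have "\<dots> = Jn q p * Jn q p" by (simp add: Iset_def card_cartesian_product)
  finally show ?thesis .
qed

lemma Sset_finite: "finite (Sset q p)" by (simp add: Sset_def Iset_def)

lemma Sset_ne: assumes "Jn q p \<ge> 1" shows "Sset q p \<noteq> {}"
proof -
  have "pt q p (Jn q p, 0) \<in> Sset q p" using assms unfolding Sset_def Iset_def by (intro imageI) auto
  then show ?thesis by auto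
qed

lemma mu_admissible:
  assumes q: "q > 0" and p: "p \<ge> 0" and J: "Jn q p \<ge> 1"
  shows "admissible_input q p (mu q p)"
proof -
  let ?S = "Sset q p"
  have S: "finite ?S" "?S \<noteq> {}" using Sset_finite Sset_ne[OF J] by auto
  have cS: "- ?S \<in> sets borel" using S by (intro borel_open open_Compl finite_imp_closed)
  have ps: "prob_space (mu q p)" unfolding mu_def by (intro prob_space.prob_space_distr) (auto simp: measure_pmf.prob_space_axioms)
  have AE: "AE x in mu q p. x \<in> ?S"
  proof (rule AE_I')
    have "emeasure (mu q p) (- ?S) = 0" unfolding mu_def
      by (subst emeasure_distr) (use cS S in \<open>auto simp: emeasure_pmf_of_set\<close>)
    then show "- ?S \<in> null_sets (mu q p)"
      using cS by (auto simp: mu_def)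
  qed (auto simp: mu_def)
  have "(\<integral>\<^sup>+ x. ennreal ((cmod x)\<^sup>2) \<partial>mu q p) \<le> (\<integral>\<^sup>+ x. ennreal p \<partial>mu q p)"
    using AE by (intro nn_integral_mono_AE) (auto elim!: eventually_mono intro!: ennreal_leI Sset_energy[OF q p])
  also have "\<dots> = ennreal p" using ps by (simp add: prob_space.emeasure_space_1)
  finally have en: "(\<integral>\<^sup>+ x. ennreal ((cmod x)\<^sup>2) \<partial>mu q p) \<le> ennreal p" .
  have AE2: "AE x in mu q p. \<exists>m::nat. m \<ge> 1 \<and> (cmod x)\<^sup>2 = 2 * pi * q * real m"
    using AE by (rule eventually_mono) (rule Sset_mod[OF q])
  show ?thesis unfolding admissible_input_def
    using ps en AE2 by (simp add: mu_def)
qed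



lemma tail_small:
  fixes \<nu> :: "complex measure" and t :: real
  assumes fin: "finite_measure \<nu>" and sets: "sets \<nu> = sets borel" and t: "t > 0"
  shows "\<exists>m::nat. measure \<nu> {z. real m \<le> cmod z} < t"
proof -
  interpret finite_measure \<nu> by fact
  define T where "T m = {z. real m \<le> cmod z}" for m :: nat
  have Ts: "range T \<subseteq> sets \<nu>" unfolding T_def sets
    by (auto intro!: borel_closed closed_Collect_le continuous_intros)
  have dec: "decseq T" unfolding T_def decseq_def by auto
  have "(\<Inter>i. T i) = {}"
  proof (rule equals0I)
    fix z assume "z \<in> (\<Inter>i. T i)"
    then have "real (nat \<lceil>cmod z\<rceil> + 1) \<le> cmod z" unfolding T_def by blast
    then show False by linarith
  qed
  then have "(\<lambda>m. measure \<nu> (T m)) \<longlonglongrightarrow> 0"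
    using finite_Lim_measure_decseq[OF Ts dec] by simp
  then have "eventually (\<lambda>m. measure \<nu> (T m) < t) sequentially"
    using t by (intro order_tendstoD) auto
  then obtain m where "measure \<nu> (T m) < t" by (meson eventually_sequentially order_refl)
  then show ?thesis unfolding T_def by blast
qed

definition gfun :: "real \<Rightarrow> complex \<Rightarrow> complex" where
  "gfun h x = x * cis (h * (cmod x)\<^sup>2)"

lemma user_bound:
  fixes q h N \<epsilon> :: real and \<nu> :: "complex measure"
  assumes q: "q > 0" and N: "N > 0" and \<epsilon>: "\<epsilon> > 0" and setsnu: "sets \<nu> = sets borel"
  shows "eventually (\<lambda>p. p \<ge> 0 \<and> Jn q p \<ge> 1 \<and>
     (\<forall>(M :: 'a measure) X Y Z. prob_space M \<longrightarrow> X \<in> borel_measurable M \<longrightarrow> Y \<in> borel_measurable M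
        \<longrightarrow> Z \<in> borel_measurable M \<longrightarrow> distr M borel X = mu q p \<longrightarrow> distr M borel Z = \<nu>
        \<longrightarrow> (AE \<omega> in M. Y \<omega> = gfun h (X \<omega>) + Z \<omega>)
        \<longrightarrow> 1 - \<epsilon> \<le> prob_space.mutual_information M 2 borel borel X Y / log 2 (p / N))) at_top"
proof -
  define e' where "e' = min \<epsilon> (1/2)"
  have e': "0 < e'" "e' \<le> 1/2" "e' \<le> \<epsilon>" using \<epsilon> by (auto simp: e'_def)
  have "\<exists>m::nat. finite_measure \<nu> \<longrightarrow> measure \<nu> {z. real m \<le> cmod z} < e' / 2"
  proof (cases "finite_measure \<nu>")
    case True then show ?thesis using tail_small[OF True setsnu, of "e'/2"] e' by auto
  qed auto
  then obtain m :: nat where m: "finite_measure \<nu> \<Longrightarrow> measure \<nu> {z. real m \<le> cmod z} < e' / 2"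
    by blast
  define C where "C = 2 + \<bar>ln N\<bar>"
  have ev1: "eventually (\<lambda>p. e' / 2 * ln p \<ge> ln (32 * pi * q * (ln p + 2)) + C) at_top"
    using e' q by real_asymp
  have ev2: "eventually (\<lambda>p. ln (32 * pi * q * (ln p + 2)) \<ge> 0) at_top"
    using q by real_asymp
  have ev3: "eventually (\<lambda>p. sqrt p / (4 * sqrt (2 * pi * q * (ln p + 2))) \<ge> 1) at_top"
    using q by real_asymp
  have ev4: "eventually (\<lambda>p. sqrt (2 * pi * q * ln p) / 4 \<ge> real m) at_top"
    using q by real_asymp
  have ev5: "eventually (\<lambda>p. p > N \<and> ln p \<ge> 0) at_top"
    using eventually_gt_at_top[of N] eventually_ge_at_top[of 1] by eventually_elim (auto intro: ln_ge_zero)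
  show ?thesis
    using ev1 ev2 ev3 ev4 ev5
  proof eventually_elim
    case (elim p)
    define r where "r = rho q p"
    define J where "J = Jn q p"
    define S where "S = Sset q p"
    have r: "r > 0" unfolding r_def by (rule rho_pos[OF q])
    have p: "p > N" "p > 0" "ln p \<ge> 0" using elim N by auto
    have r2: "r\<^sup>2 = 2 * pi * q * real (sf p)" unfolding r_def by (rule rho_sq[OF q])
    have sfle: "real (sf p) \<le> ln p + 2" "ln p \<le> real (sf p)" unfolding sf_def using p by linarith+
    have rup: "r \<le> sqrt (2 * pi * q * (ln p + 2))"
    proof -
      have "r = sqrt (r\<^sup>2)" using r by simp
      also have "\<dots> \<le> sqrt (2 * pi * q * (ln p + 2))" unfolding r2 using sfle q by (intro real_sqrt_le_mono mult_left_mono) auto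
      finally show ?thesis .
    qed
    have rlo: "sqrt (2 * pi * q * ln p) \<le> r"
    proof -
      have "sqrt (2 * pi * q * ln p) \<le> sqrt (r\<^sup>2)" unfolding r2 using sfle q by (intro real_sqrt_le_mono mult_left_mono) auto
      then show ?thesis using r by simp
    qed
    have big: "sqrt p / (4 * r) \<ge> 1"
    proof -
      have sp: "sqrt (2 * pi * q * (ln p + 2)) > 0" using r rup by linarith
      have "1 \<le> sqrt p / (4 * sqrt (2 * pi * q * (ln p + 2)))" by (rule elim(3))
      also have "\<dots> \<le> sqrt p / (4 * r)" using r rup p sp by (intro divide_left_mono) auto
      finally show ?thesis .
    qed
    have Jlo: "real J \<ge> sqrt p / (4 * r)"
    proof -
      have "real J = real_of_int \<lfloor>sqrt p / (2 * r)\<rfloor>" unfolding J_def Jn_def r_def[symmetric]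
        using r p by simp
      also have "\<dots> \<ge> sqrt p / (2 * r) - 1" by linarith
      finally have "real J \<ge> sqrt p / (2 * r) - 1" .
      moreover have "sqrt p / (2 * r) = 2 * (sqrt p / (4 * r))" by (simp add: field_simps)
      ultimately show ?thesis using big by linarith
    qed
    have J1: "J \<ge> 1" using Jlo big by linarith
    have cardS: "card S = J * J" unfolding S_def J_def by (rule Sset_card[OF q])
    have lnJ: "ln (real (card S)) \<ge> ln p - ln (16 * r\<^sup>2)"
    proof -
      have "ln (real (card S)) = 2 * ln (real J)" unfolding cardS using J1 by (simp add: ln_mult)
      also have "2 * ln (real J) \<ge> 2 * ln (sqrt p / (4 * r))"
      proof -
        have "ln (sqrt p / (4 * r)) \<le> ln (real J)" using Jlo big by (subst ln_le_cancel_iff) auto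
        then show ?thesis by simp
      qed
      also have "2 * ln (sqrt p / (4 * r)) = ln p - ln (16 * r\<^sup>2)"
      proof -
        have "2 * ln (sqrt p / (4 * r)) = ln ((sqrt p / (4 * r))\<^sup>2)" using p r by (simp add: ln_realpow)
        also have "(sqrt p / (4 * r))\<^sup>2 = p / (16 * r\<^sup>2)" using p by (simp add: power_divide power_mult_distrib)
        also have "ln (p / (16 * r\<^sup>2)) = ln p - ln (16 * r\<^sup>2)" using p r by (simp add: ln_div)
        finally show ?thesis .
      qed
      finally show ?thesis .
    qed
    have lnr: "ln (16 * r\<^sup>2) \<le> ln (32 * pi * q * (ln p + 2))"
    proof -
      have pos1: "0 < real (sf p)" by (simp add: sf_def)
      have pos2: "0 < ln p + 2" using p(3) by linarith
      show ?thesis unfolding r2 using sfle q r pos1 pos2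
        by (intro ln_le_cancel_iff[THEN iffD2] mult_pos_pos mult_right_mono) auto
    qed
    have keyineq: "(1 - e') * ln (p / N) \<le> (1 - e' / 2) * (ln p - ln (16 * r\<^sup>2)) - 2"
    proof -
      have lnpN: "ln (p / N) = ln p - ln N" using p N by (simp add: ln_div)
      have "(1 - e' / 2) * ln (16 * r\<^sup>2) \<le> ln (32 * pi * q * (ln p + 2))"
      proof (cases "ln (16 * r\<^sup>2) \<ge> 0")
        case True
        then have "(1 - e' / 2) * ln (16 * r\<^sup>2) \<le> 1 * ln (16 * r\<^sup>2)" using e' by (intro mult_right_mono) auto
        then show ?thesis using lnr by simp
      next
        case False
        then have "(1 - e' / 2) * ln (16 * r\<^sup>2) \<le> 0" using e' by (intro mult_nonneg_nonpos) auto
        then show ?thesis using elim(2) by simp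
      qed
      moreover have "-((1 - e') * ln N) \<le> \<bar>ln N\<bar>"
      proof -
        have "\<bar>(1 - e') * ln N\<bar> = (1 - e') * \<bar>ln N\<bar>" using e' by (simp add: abs_mult)
        also have "\<dots> \<le> 1 * \<bar>ln N\<bar>" using e' by (intro mult_right_mono) auto
        finally have "\<bar>(1 - e') * ln N\<bar> \<le> 1 * \<bar>ln N\<bar>" .
        moreover have "-((1 - e') * ln N) \<le> \<bar>(1 - e') * ln N\<bar>" by (rule abs_ge_minus_self)
        ultimately show ?thesis by linarith
      qed
      ultimately show ?thesis using elim(1) unfolding lnpN C_def by (simp add: algebra_simps)
    qed
    have ratio_ok: "\<And>I. ((1 - e' / 2) * ln (real (card S)) - 2) / ln 2 \<le> I \<Longrightarrow> 1 - \<epsilon> \<le> I / log 2 (p / N)"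
    proof -
      fix I assume I: "((1 - e' / 2) * ln (real (card S)) - 2) / ln 2 \<le> I"
      have l2: "ln 2 > (0::real)" by simp
      have lpos: "log 2 (p / N) > 0" using p N by simp
      have "(1 - e' / 2) * (ln p - ln (16 * r\<^sup>2)) \<le> (1 - e' / 2) * ln (real (card S))"
        using lnJ e' by (intro mult_left_mono) auto
      then have "(1 - e') * ln (p / N) \<le> (1 - e' / 2) * ln (real (card S)) - 2" using keyineq by linarith
      then have "(1 - e') * ln (p / N) / ln 2 \<le> ((1 - e' / 2) * ln (real (card S)) - 2) / ln 2"
        using l2 by (intro divide_right_mono) auto
      then have "(1 - e') * log 2 (p / N) \<le> I" using I by (simp add: log_def)
      then have "1 - e' \<le> I / log 2 (p / N)" using lpos by (simp add: pos_le_divide_eq)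
      then show "1 - \<epsilon> \<le> I / log 2 (p / N)" using e' by linarith
    qed
    show ?case
    proof (intro conjI allI impI)
      show "p \<ge> 0" using p by simp
      show "Jn q p \<ge> 1" using J1 J_def by simp
      fix M :: "'a measure" and X Y Z
      assume M: "prob_space M" and Xm[measurable]: "X \<in> borel_measurable M"
        and Ym[measurable]: "Y \<in> borel_measurable M" and Zm[measurable]: "Z \<in> borel_measurable M"
        and dX: "distr M borel X = mu q p" and dZ: "distr M borel Z = \<nu>"
        and AEY: "AE \<omega> in M. Y \<omega> = gfun h (X \<omega>) + Z \<omega>"
      interpret M: prob_space M by fact
      have Sfin: "finite S" "S \<noteq> {}" unfolding S_def using Sset_finite Sset_ne J1 J_def by auto
      have Sb[measurable]: "S \<in> sets borel" using Sfin by (intro borel_closed finite_imp_closed)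
      have finnu: "finite_measure \<nu>"
      proof -
        interpret D: prob_space "distr M borel Z" by (rule M.prob_space_distr) simp
        show ?thesis unfolding dZ[symmetric] by (rule D.finite_measure_axioms)
      qed
      define \<delta> where "\<delta> = r / 4"
      have dm: "real m \<le> \<delta>" unfolding \<delta>_def using elim(4) rlo by linarith
      have tail: "measure M {\<omega>\<in>space M. \<delta> \<le> cmod (Z \<omega>)} < e' / 2"
      proof -
        have "measure M {\<omega>\<in>space M. \<delta> \<le> cmod (Z \<omega>)} = measure \<nu> {z. \<delta> \<le> cmod z}"
          unfolding dZ[symmetric] by (subst measure_distr) (auto simp: vimage_def Int_def conj_commute)
        also have "\<dots> \<le> measure \<nu> {z. real m \<le> cmod z}"
          using dm finnu setsnu by (intro finite_measure.finite_measure_mono) (auto intro!: borel_closed closed_Collect_le continuous_intros)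
        also have "\<dots> < e' / 2" by (rule m[OF finnu])
        finally show ?thesis .
      qed
      have AEX: "AE \<omega> in M. X \<omega> \<in> S"
      proof -
        have "emeasure (mu q p) (- S) = 0" unfolding mu_def S_def
          by (subst emeasure_distr) (use Sb Sfin in \<open>auto simp: emeasure_pmf_of_set S_def\<close>)
        then have "emeasure M (X -` (- S) \<inter> space M) = 0"
          unfolding dX[symmetric] by (subst (asm) emeasure_distr) auto
        then show ?thesis by (intro AE_I'[of "X -` (- S) \<inter> space M"]) auto
      qed
      define G where "G = {\<omega>\<in>space M. X \<omega> \<in> S \<and> dist (gfun h (X \<omega>)) (Y \<omega>) < \<delta>}"
      have gm[measurable]: "gfun h \<in> borel_measurable borel"
        unfolding gfun_def by (intro borel_measurable_continuous_onI continuous_intros)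
      have Gm: "G \<in> sets M" unfolding G_def by measurable
      have good: "1 - e' / 2 \<le> measure M G"
      proof -
        have "measure M {\<omega>\<in>space M. cmod (Z \<omega>) < \<delta>} \<le> measure M G"
        proof (rule M.finite_measure_mono_AE[OF _ Gm])
          show "AE \<omega> in M. \<omega> \<in> {\<omega>\<in>space M. cmod (Z \<omega>) < \<delta>} \<longrightarrow> \<omega> \<in> G"
            using AEX AEY by eventually_elim (auto simp: G_def dist_norm)
        qed
        moreover have "measure M {\<omega>\<in>space M. cmod (Z \<omega>) < \<delta>} = 1 - measure M {\<omega>\<in>space M. \<delta> \<le> cmod (Z \<omega>)}"
        proof -
          have "{\<omega>\<in>space M. cmod (Z \<omega>) < \<delta>} = space M - {\<omega>\<in>space M. \<delta> \<le> cmod (Z \<omega>)}" by auto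
          then show ?thesis by (simp add: M.prob_compl)
        qed
        ultimately show ?thesis using tail by linarith
      qed
      have sep: "2 * \<delta> \<le> dist (gfun h s) (gfun h s')" if ss: "s \<in> S" "s' \<in> S" "s \<noteq> s'" for s s'
      proof -
        obtain a where a: "a \<in> Iset q p" "s = pt q p a"
          using ss(1) unfolding S_def Sset_def by blast
        obtain b where b: "b \<in> Iset q p" "s' = pt q p b"
          using ss(2) unfolding S_def Sset_def by blast
        note ab = a(1) b(1) a(2) b(2)
        then have "a \<noteq> b" using ss by auto
        from Sset_sep[OF q ab(1,2) this, of h] show ?thesis
          unfolding \<delta>_def r_def gfun_def ab by simp
      qed
      have dX': "distr M borel X = distr (measure_pmf (pmf_of_set S)) borel id"
        using dX by (simp add: mu_def S_def)
      have IB: "((1 - e' / 2) * ln (card S) - 2) / ln 2 \<le> M.mutual_information 2 borel borel X Y"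
        by (rule info_bound[OF M Xm Ym Sfin dX' sep]) (use good[unfolded G_def] e' in auto)
      show "1 - \<epsilon> \<le> M.mutual_information 2 borel borel X Y / log 2 (p / N)"
        by (rule ratio_ok[OF IB])
    qed
  qed
qed



lemma phase_sum:
  fixes K k :: nat and hk :: "nat \<Rightarrow> real" and x :: "nat \<Rightarrow> complex" and q :: "nat \<Rightarrow> real"
  assumes k: "k < K"
    and ints: "\<And>l. l < K \<Longrightarrow> l \<noteq> k \<Longrightarrow> hk l * q l \<in> \<int>"
    and md: "\<And>l. l < K \<Longrightarrow> \<exists>m::nat. m \<ge> 1 \<and> (cmod (x l))\<^sup>2 = 2 * pi * q l * real m"
  shows "cis (\<Sum>l<K. hk l * (cmod (x l))\<^sup>2) = cis (hk k * (cmod (x k))\<^sup>2)"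
proof -
  define t where "t l = hk l * (cmod (x l))\<^sup>2 / (2 * pi)" for l
  have tI: "t l \<in> \<int>" if "l \<in> {..<K} - {k}" for l
  proof -
    from that have l: "l < K" "l \<noteq> k" by auto
    obtain m :: nat where m: "(cmod (x l))\<^sup>2 = 2 * pi * q l * real m" using md[OF l(1)] by blast
    have "t l = (hk l * q l) * real m" unfolding t_def m by (simp add: field_simps)
    then show ?thesis using ints[OF l] by simp
  qed
  have split: "(\<Sum>l<K. hk l * (cmod (x l))\<^sup>2) = hk k * (cmod (x k))\<^sup>2 + 2 * pi * (\<Sum>l\<in>{..<K} - {k}. t l)"
  proof -
    have "(\<Sum>l<K. hk l * (cmod (x l))\<^sup>2) = hk k * (cmod (x k))\<^sup>2 + (\<Sum>l\<in>{..<K} - {k}. hk l * (cmod (x l))\<^sup>2)"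
      using k by (subst sum.remove[of _ k]) auto
    also have "(\<Sum>l\<in>{..<K} - {k}. hk l * (cmod (x l))\<^sup>2) = 2 * pi * (\<Sum>l\<in>{..<K} - {k}. t l)"
      unfolding t_def by (simp add: sum_distrib_left)
    finally show ?thesis .
  qed
  have "(\<Sum>l\<in>{..<K} - {k}. t l) \<in> \<int>" using tI by (intro Ints_sum) auto
  then have "cis (2 * pi * (\<Sum>l\<in>{..<K} - {k}. t l)) = 1" by (rule cis_multiple_2pi)
  then show ?thesis unfolding split by (simp add: cis_mult[symmetric])
qed

theorem mainTheorem6:
  fixes K :: nat and h :: "nat \<Rightarrow> nat \<Rightarrow> real" and q :: "nat \<Rightarrow> real" and N :: real
  assumes "K \<ge> 1"
    and "N > 0"
    and "\<forall>k<K. \<forall>l<K. k \<noteq> l \<longrightarrow> h k l \<in> \<rat>"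
    and "\<forall>l<K. q l > 0"
    and "\<forall>k<K. \<forall>l<K. k \<noteq> l \<longrightarrow> h k l * q l \<in> \<int>"
  shows "\<exists>\<mu> :: nat \<Rightarrow> real \<Rightarrow> complex measure.
           \<forall>\<epsilon>>0. eventually (\<lambda>P.
              (\<forall>l<K. admissible_input (q l) (P l) (\<mu> l (P l))) \<and>
              (\<forall>(M :: 'a measure) X Z. channel_setup M K N \<mu> P X Z \<longrightarrow>
                 (\<forall>k<K. 1 - \<epsilon> \<le>
                    prob_space.mutual_information M 2 borel borel (X k) (channel_out K h X Z k)
                      / log 2 (P k / N))))
             (powers_to_infty K)"
proof (intro exI[of _ "\<lambda>l p. mu (q l) p"] allI impI)
  fix \<epsilon> :: real assume \<epsilon>: "\<epsilon> > 0"
  have N: "N > 0" by fact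
  have qpos: "\<And>l. l < K \<Longrightarrow> q l > 0" using assms(4) by auto
  have ints: "\<And>k l. k < K \<Longrightarrow> l < K \<Longrightarrow> k \<noteq> l \<Longrightarrow> h k l * q l \<in> \<int>" using assms(5) by auto
  define \<nu> :: "complex measure" where "\<nu> = density lborel (\<lambda>z. ennreal (cscg_density N z))"
  have setsnu: "sets \<nu> = sets borel" unfolding \<nu>_def by simp
  define C where "C l p \<longleftrightarrow> p \<ge> 0 \<and> Jn (q l) p \<ge> 1 \<and>
     (\<forall>(M :: 'a measure) X Y Z. prob_space M \<longrightarrow> X \<in> borel_measurable M \<longrightarrow> Y \<in> borel_measurable M
        \<longrightarrow> Z \<in> borel_measurable M \<longrightarrow> distr M borel X = mu (q l) p \<longrightarrow> distr M borel Z = \<nu>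
        \<longrightarrow> (AE \<omega> in M. Y \<omega> = gfun (h l l) (X \<omega>) + Z \<omega>)
        \<longrightarrow> 1 - \<epsilon> \<le> prob_space.mutual_information M 2 borel borel X Y / log 2 (p / N))" for l p
  have evC: "eventually (C l) at_top" if "l < K" for l
    unfolding C_def by (rule user_bound[OF qpos[OF that] N \<epsilon> setsnu])
  have "eventually (\<lambda>B. \<forall>l\<in>{..<K}. \<forall>p\<ge>B. C l p) at_top"
  proof (rule eventually_ball_finite)
    show "\<forall>l\<in>{..<K}. eventually (\<lambda>B. \<forall>p\<ge>B. C l p) at_top"
    proof
      fix l assume "l \<in> {..<K}"
      then obtain B0 where "\<And>p. p \<ge> B0 \<Longrightarrow> C l p" using evC[of l] by (auto simp: eventually_at_top_linorder)
      then show "eventually (\<lambda>B. \<forall>p\<ge>B. C l p) at_top"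
        unfolding eventually_at_top_linorder by (intro exI[of _ B0]) auto
    qed
  qed simp
  then obtain B where B: "\<And>l p. l < K \<Longrightarrow> p \<ge> B \<Longrightarrow> C l p"
    unfolding eventually_at_top_linorder by auto
  show "eventually (\<lambda>P.
              (\<forall>l<K. admissible_input (q l) (P l) (mu (q l) (P l))) \<and>
              (\<forall>(M :: 'a measure) X Z. channel_setup M K N (\<lambda>l p. mu (q l) p) P X Z \<longrightarrow>
                 (\<forall>k<K. 1 - \<epsilon> \<le>
                    prob_space.mutual_information M 2 borel borel (X k) (channel_out K h X Z k)
                      / log 2 (P k / N))))
             (powers_to_infty K)"
    unfolding powers_to_infty_def
  proof (rule eventually_INF1[of B UNIV], simp, unfold eventually_principal, intro ballI)
    fix P :: "nat \<Rightarrow> real" assume "P \<in> {P. \<forall>l<K. B \<le> P l}"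
    then have CP: "\<And>l. l < K \<Longrightarrow> C l (P l)" using B by auto
    have adm: "\<And>l. l < K \<Longrightarrow> admissible_input (q l) (P l) (mu (q l) (P l))"
      using CP qpos by (auto simp: C_def intro!: mu_admissible)
    show "(\<forall>l<K. admissible_input (q l) (P l) (mu (q l) (P l))) \<and>
              (\<forall>(M :: 'a measure) X Z. channel_setup M K N (\<lambda>l p. mu (q l) p) P X Z \<longrightarrow>
                 (\<forall>k<K. 1 - \<epsilon> \<le>
                    prob_space.mutual_information M 2 borel borel (X k) (channel_out K h X Z k)
                      / log 2 (P k / N)))"
    proof (intro conjI allI impI)
      show "\<And>l. l < K \<Longrightarrow> admissible_input (q l) (P l) (mu (q l) (P l))" by (rule adm)
      fix M :: "'a measure" and X Z k
      assume cs: "channel_setup M K N (\<lambda>l p. mu (q l) p) P X Z" and k: "k < K"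
      have M: "prob_space M" using cs by (simp add: channel_setup_def)
      interpret M: prob_space M by fact
      have Xm: "\<And>l. l < K \<Longrightarrow> X l \<in> borel_measurable M" using cs by (simp add: channel_setup_def)
      have dX: "\<And>l. l < K \<Longrightarrow> distr M borel (X l) = mu (q l) (P l)" using cs by (simp add: channel_setup_def)
      have dZ0: "distributed M lborel (Z k) (\<lambda>z. ennreal (cscg_density N z))"
        using cs k by (simp add: channel_setup_def)
      have Zml: "Z k \<in> measurable M lborel" using dZ0 by (simp add: distributed_def)
      have Zm[measurable]: "Z k \<in> borel_measurable M" using Zml by simp
      have dZ: "distr M borel (Z k) = \<nu>"
      proof -
        have "distr M borel (Z k) = distr M lborel (Z k)" by (rule distr_cong) auto
        also have "\<dots> = \<nu>" using dZ0 by (simp add: distributed_def \<nu>_def)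
        finally show ?thesis .
      qed
      have Xkm[measurable]: "X k \<in> borel_measurable M" using Xm k by simp
      have sm[measurable]: "(\<lambda>\<omega>. \<Sum>l<K. h k l * (cmod (X l \<omega>))\<^sup>2) \<in> borel_measurable M"
      proof (rule borel_measurable_sum)
        fix l assume "l \<in> {..<K}"
        then have [measurable]: "X l \<in> borel_measurable M" using Xm by auto
        show "(\<lambda>\<omega>. h k l * (cmod (X l \<omega>))\<^sup>2) \<in> borel_measurable M" by measurable
      qed
      have cm: "cis \<in> borel_measurable borel"
        by (rule borel_measurable_continuous_onI) (auto intro!: continuous_intros)
      have m2: "(\<lambda>\<omega>. cis (\<Sum>l<K. h k l * (cmod (X l \<omega>))\<^sup>2)) \<in> borel_measurable M"
        using measurable_compose[OF sm cm] by (simp add: comp_def)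
      have Ym: "channel_out K h X Z k \<in> borel_measurable M"
        unfolding channel_out_def using Xkm m2 Zm by (intro borel_measurable_add borel_measurable_times) auto
      have AEm: "AE \<omega> in M. \<forall>l\<in>{..<K}. \<exists>m::nat. m \<ge> 1 \<and> (cmod (X l \<omega>))\<^sup>2 = 2 * pi * q l * real m"
      proof (rule AE_finite_allI)
        fix l assume "l \<in> {..<K}"
        then have l: "l < K" by simp
        have "AE x in distr M borel (X l). \<exists>m::nat. m \<ge> 1 \<and> (cmod x)\<^sup>2 = 2 * pi * q l * real m"
          unfolding dX[OF l] using adm[OF l] by (simp add: admissible_input_def)
        then show "AE \<omega> in M. \<exists>m::nat. m \<ge> 1 \<and> (cmod (X l \<omega>))\<^sup>2 = 2 * pi * q l * real m"
          by (rule AE_distrD[OF Xm[OF l]])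
      qed simp
      have AEY: "AE \<omega> in M. channel_out K h X Z k \<omega> = gfun (h k k) (X k \<omega>) + Z k \<omega>"
        using AEm
      proof eventually_elim
        case (elim \<omega>)
        have "cis (\<Sum>l<K. h k l * (cmod (X l \<omega>))\<^sup>2) = cis (h k k * (cmod (X k \<omega>))\<^sup>2)"
          by (rule phase_sum[OF k]) (use ints k elim in auto)
        then show ?case by (simp add: channel_out_def gfun_def)
      qed
      have Ck: "C k (P k)" by (rule CP[OF k])
      show "1 - \<epsilon> \<le> M.mutual_information 2 borel borel (X k) (channel_out K h X Z k) / log 2 (P k / N)"
        using Ck M Xkm Ym Zm dX[OF k] dZ AEY unfolding C_def by blast
    qed
  qed
qed


end
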